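(* Let \(\mathcal{I}\) be an instance of 3-SAT and let \(G(\mathcal{I})\) and \(T(\mathcal{I})\) be the graph and spanning tree constructed below. If \(\mathcal{I}\) does not admit a satisfying assignment, then \(T(\mathcal{I})\) is not the \(\mathcal{F}\)-tree of any LBFS ordering of \(G(\mathcal{I})\).
   Context: Let \(\mathcal{I}\) have variables \(x_1,\dots,x_k\) and clauses \(C_1,\dots,C_l\), each a disjunction of three literals. \(G(\mathcal{I})\) has vertices: literal vertices \(X=\{x_1,\dots,x_k,\overline{x_1},\dots,\overline{x_k}\}\); for each clause \(C_i\) three vertices \(a_i,c_i,t_i\); and four vertices \(r,p,q,u\). Edges: any two vertices of \(X\) are adjacent except the pairs \(x_j\overline{x_j}\); each \(\{a_i,c_i,t_i\}\) is a triangle; \(c_i\) is adjacent to the literal vertices of the literals occurring in \(C_i\); \(r\) is adjacent to every vertex except \(u\) and the \(t_i\); \(u\) is adjacent to every vertex except \(r\) and the \(t_i\); \(p\) is adjacent to every vertex of \(X\) and to \(q\); \(q\) is adjacent to every vertex of \(X\) and to every \(a_i\); there are no other edges. \(T(\mathcal{I})\) is the spanning tree consisting of all edges of \(G(\mathcal{I})\) incident to \(r\), the edge \(up\), and the edges \(c_it_i\) for \(i=1,\dots,l\). An LBFS ordering (with \(n\) the number of vertices) is produced by starting with label \((n)\) on a start vertex, empty labels elsewhere, and for \(j=1,\dots,n\) picking an unnumbered vertex of lexicographically largest label as \(v_j\) and appending \(n-j\) to the labels of its unnumbered neighbors (ties arbitrary). The \(\mathcal{F}\)-tree of an ordering \((v_1,\dots,v_n)\)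 has, for each \(v\ne v_1\), an edge from \(v\) to its leftmost neighbor in the ordering. *)

theory Defs
  imports Main
begin

text \<open>A 3-SAT instance: variables are indexed 0..<k; a literal is a pair (j, b)
  meaning x_j if b = True and the negation of x_j if b = False; an instance is a
  list of clauses, each a list of exactly three literals over variables < k.\<close>

type_synonym literal = "nat \<times> bool"

definition wf_instance :: "nat \<Rightarrow> literal list list \<Rightarrow> bool" where
  "wf_instance k cls \<longleftrightarrow> (\<forall>c \<in> set cls. length c = 3 \<and> (\<forall>(j, b) \<in> set c. j < k))"

definition satisfiable :: "nat \<Rightarrow> literal list list \<Rightarrow> bool" where
  "satisfiable k cls \<longleftrightarrow> (\<exists>\<alpha> :: nat \<Rightarrow> bool. \<forall>c \<in> set cls. \<exists>(j, b) \<in> set c. \<alpha> j = b)"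

datatype vert = Lit nat bool | A nat | C nat | T nat | R | P | Q | U

definition Xset :: "nat \<Rightarrow> vert set" where
  "Xset k = {Lit j b | j b. j < k}"

definition verts :: "nat \<Rightarrow> literal list list \<Rightarrow> vert set" where
  "verts k cls = Xset k \<union> {A i | i. i < length cls} \<union> {C i | i. i < length cls}
     \<union> {T i | i. i < length cls} \<union> {R, P, Q, U}"

definition base_edge :: "nat \<Rightarrow> literal list list \<Rightarrow> vert \<Rightarrow> vert \<Rightarrow> bool" where
  "base_edge k cls x y \<longleftrightarrow>
     (\<exists>j b j' b'. x = Lit j b \<and> y = Lit j' b' \<and> j < k \<and> j' < k \<and> j \<noteq> j')
   \<or> (\<exists>i < length cls. (x = A i \<and> y = C i) \<or> (x = C i \<and> y = T i) \<or> (x = A i \<and> y = T i))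
   \<or> (\<exists>i < length cls. \<exists>j b. x = C i \<and> y = Lit j b \<and> (j, b) \<in> set (cls ! i))
   \<or> (x = R \<and> y \<in> verts k cls \<and> y \<noteq> R \<and> y \<noteq> U \<and> (\<forall>i. y \<noteq> T i))
   \<or> (x = U \<and> y \<in> verts k cls \<and> y \<noteq> U \<and> y \<noteq> R \<and> (\<forall>i. y \<noteq> T i))
   \<or> (x = P \<and> (y \<in> Xset k \<or> y = Q))
   \<or> (x = Q \<and> (y \<in> Xset k \<or> (\<exists>i < length cls. y = A i)))"

definition adjG :: "nat \<Rightarrow> literal list list \<Rightarrow> vert \<Rightarrow> vert \<Rightarrow> bool" where
  "adjG k cls x y \<longleftrightarrow> x \<noteq> y \<and> (base_edge k cls x y \<or> base_edge k cls y x)"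

definition treeT :: "nat \<Rightarrow> literal list list \<Rightarrow> vert set set" where
  "treeT k cls = {{R, x} | x. adjG k cls R x} \<union> {{U, P}} \<union> {{C i, T i} | i. i < length cls}"

text \<open>Strict lexicographic order on labels (a proper prefix is smaller).\<close>
definition lex_less :: "nat list \<Rightarrow> nat list \<Rightarrow> bool" where
  "lex_less xs ys \<longleftrightarrow> (xs, ys) \<in> lexord {(a, b). a < b}"

text \<open>Label of vertex w at the beginning of step j (1-based) of LBFS with start
  vertex s, when the vertices chosen so far are v_1..v_{j-1} = sigma!0..sigma!(j-2),
  n being the number of vertices.\<close>
definition lbfs_label ::
  "('v \<Rightarrow> 'v \<Rightarrow> bool) \<Rightarrow> nat \<Rightarrow> 'v \<Rightarrow> 'v list \<Rightarrow> nat \<Rightarrow> 'v \<Rightarrow> nat list" where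
  "lbfs_label adj n s \<sigma> j w =
     (if w = s then [n] else []) @ map (\<lambda>i. n - i) (filter (\<lambda>i. adj (\<sigma> ! (i - 1)) w) [1..<j])"

text \<open>sigma (with v_j = sigma!(j-1)) is an ordering of V that can be produced by LBFS
  started at s: at each step j the chosen vertex has a lexicographically largest label
  among the unnumbered vertices.\<close>
definition is_lbfs :: "('v \<Rightarrow> 'v \<Rightarrow> bool) \<Rightarrow> 'v set \<Rightarrow> 'v \<Rightarrow> 'v list \<Rightarrow> bool" where
  "is_lbfs adj V s \<sigma> \<longleftrightarrow> distinct \<sigma> \<and> set \<sigma> = V \<and> s \<in> V \<and>
     (\<forall>j \<in> {1..length \<sigma>}. \<forall>w \<in> V - set (take (j - 1) \<sigma>).
        \<not> lex_less (lbfs_label adj (length \<sigma>) s \<sigma> j (\<sigma> ! (j - 1)))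
                    (lbfs_label adj (length \<sigma>) s \<sigma> j w))"

definition leftmost_nbr :: "('v \<Rightarrow> 'v \<Rightarrow> bool) \<Rightarrow> 'v list \<Rightarrow> 'v \<Rightarrow> 'v" where
  "leftmost_nbr adj \<sigma> v = \<sigma> ! (LEAST i. i < length \<sigma> \<and> adj (\<sigma> ! i) v)"

definition F_tree :: "('v \<Rightarrow> 'v \<Rightarrow> bool) \<Rightarrow> 'v list \<Rightarrow> 'v set set" where
  "F_tree adj \<sigma> = {{v, leftmost_nbr adj \<sigma> v} | v. v \<in> set \<sigma> \<and> v \<noteq> \<sigma> ! 0}"

end

theory Submission
  imports Defs
begin


lemma key:
  assumes lb: "is_lbfs adj V s \<sigma>" and s0: "s = \<sigma>!0"
  and pw: "d < pw" "pw < pv" "pv < length \<sigma>"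
  and a1: "adj (\<sigma>!d) (\<sigma>!pv)" and a2: "\<not> adj (\<sigma>!d) (\<sigma>!pw)"
  and ag: "\<forall>t<d. adj (\<sigma>!t) (\<sigma>!pv) = adj (\<sigma>!t) (\<sigma>!pw)"
  shows False
proof -
  have dist: "distinct \<sigma>" using lb by (simp add: is_lbfs_def)
  have vV: "\<sigma>!pv \<in> V" using lb pw by (auto simp: is_lbfs_def)
  have notin: "\<sigma>!pv \<notin> set (take pw \<sigma>)"
  proof
    assume "\<sigma>!pv \<in> set (take pw \<sigma>)"
    then obtain i where "i < length (take pw \<sigma>)" "take pw \<sigma> ! i = \<sigma>!pv" by (auto simp: in_set_conv_nth)
    then have "i < pw" "\<sigma>!i = \<sigma>!pv" by auto
    with dist pw show False by (simp add: nth_eq_iff_index_eq)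
  qed
  have l0: "0 < length \<sigma>" using pw by linarith
  have ns: "\<sigma>!pv \<noteq> s" "\<sigma>!pw \<noteq> s"
    using nth_eq_iff_index_eq[OF dist, of pv 0] nth_eq_iff_index_eq[OF dist, of pw 0] s0 pw l0 by auto
  let ?n = "length \<sigma>"
  let ?L = "lbfs_label adj ?n s \<sigma> (Suc pw)"
  have "Suc pw \<in> {1..length \<sigma>}" using pw by auto
  with lb vV notin have nl: "\<not> lex_less (?L (\<sigma>!pw)) (?L (\<sigma>!pv))"
    unfolding is_lbfs_def by fastforce
  have split: "[1..<Suc pw] = [1..<Suc d] @ Suc d # [Suc (Suc d)..<Suc pw]"
  proof -
    have "[1..<Suc pw] = [1..<Suc d] @ [Suc d..<Suc d + (pw - d)]"
      using upt_add_eq_append[of 1 "Suc d" "pw - d"] pw by simp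
    also have "[Suc d..<Suc d + (pw - d)] = Suc d # [Suc (Suc d)..<Suc pw]"
      using pw by (simp add: upt_conv_Cons)
    finally show ?thesis .
  qed
  define pre where "pre = map (\<lambda>i. ?n - i) (filter (\<lambda>i. adj (\<sigma>!(i-1)) (\<sigma>!pv)) [1..<Suc d])"
  have pre2: "pre = map (\<lambda>i. ?n - i) (filter (\<lambda>i. adj (\<sigma>!(i-1)) (\<sigma>!pw)) [1..<Suc d])"
    unfolding pre_def using ag by (intro arg_cong[where f="map _"] filter_cong) auto
  define rw where "rw = filter (\<lambda>i. adj (\<sigma>!(i-1)) (\<sigma>!pw)) [Suc (Suc d)..<Suc pw]"
  define rv where "rv = filter (\<lambda>i. adj (\<sigma>!(i-1)) (\<sigma>!pv)) [Suc (Suc d)..<Suc pw]"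
  have Lw: "?L (\<sigma>!pw) = pre @ map (\<lambda>i. ?n - i) rw"
    using ns a2 unfolding lbfs_label_def rw_def pre2 split by simp
  have Lv: "?L (\<sigma>!pv) = pre @ (?n - Suc d) # map (\<lambda>i. ?n - i) rv"
    using ns a1 unfolding lbfs_label_def rv_def pre_def split by simp
  have "(map (\<lambda>i. ?n - i) rw, (?n - Suc d) # map (\<lambda>i. ?n - i) rv) \<in> lexord {(a, b). a < b}"
  proof (cases rw)
    case Nil then show ?thesis by simp
  next
    case (Cons i r)
    then have "i \<in> set rw" by simp
    then have "Suc (Suc d) \<le> i" "i \<le> pw" unfolding rw_def by auto
    with pw have "?n - i < ?n - Suc d" by linarith
    with Cons show ?thesis by simp
  qed
  then have "lex_less (?L (\<sigma>!pw)) (?L (\<sigma>!pv))"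
    unfolding lex_less_def Lw Lv by (rule lexord_append_leftI)
  with nl show False by simp
qed



lemma lm_le:
  assumes "distinct \<sigma>" "i < length \<sigma>" "adj (\<sigma>!i) x" "leftmost_nbr adj \<sigma> x = \<sigma>!p" "p < length \<sigma>"
  shows "p \<le> i"
proof -
  let ?L = "LEAST i. i < length \<sigma> \<and> adj (\<sigma>!i) x"
  have L1: "?L < length \<sigma>" using LeastI[of "\<lambda>i. i < length \<sigma> \<and> adj (\<sigma>!i) x" i] assms by blast
  have L2: "?L \<le> i" using Least_le[of "\<lambda>i. i < length \<sigma> \<and> adj (\<sigma>!i) x" i] assms by blast
  have "\<sigma>!?L = \<sigma>!p" using assms(4) unfolding leftmost_nbr_def .
  then have "?L = p" using nth_eq_iff_index_eq[OF assms(1) L1 assms(5)] by simp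
  with L2 show ?thesis by simp
qed

lemma lm0:
  assumes "\<sigma> \<noteq> []" "adj (\<sigma>!0) x"
  shows "leftmost_nbr adj \<sigma> x = \<sigma>!0"
  unfolding leftmost_nbr_def using assms by (subst Least_eq_0) auto

lemma Ftree_mem: "x \<in> set \<sigma> \<Longrightarrow> x \<noteq> \<sigma>!0 \<Longrightarrow> {x, leftmost_nbr adj \<sigma> x} \<in> F_tree adj \<sigma>"
  unfolding F_tree_def by blast

lemma treeU: "{U, y} \<in> treeT k cls \<Longrightarrow> y = P"
  unfolding treeT_def adjG_def base_edge_def by (auto simp: doubleton_eq_iff)

lemma treeTi: "{T i, y} \<in> treeT k cls \<Longrightarrow> y = C i"
  unfolding treeT_def adjG_def base_edge_def by (auto simp: doubleton_eq_iff)

lemma adjR_U: "adjG k cls R y \<Longrightarrow> adjG k cls y U"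
  unfolding adjG_def base_edge_def by (auto simp: verts_def)

lemma adj_sym: "adjG k cls x y = adjG k cls y x"
  unfolding adjG_def by auto

lemma agree1:
  assumes "z \<in> verts k cls" "\<forall>i. z \<noteq> A i \<and> z \<noteq> C i" "z \<noteq> Lit j b" "z \<noteq> Lit j (\<not> b)" "j < k" "z \<noteq> Q"
  shows "adjG k cls z Q = adjG k cls z (Lit j (\<not> b))"
  using assms unfolding adjG_def base_edge_def verts_def Xset_def by auto

lemma agree2:
  assumes "z \<in> verts k cls" "\<forall>i'. z \<noteq> A i' \<and> z \<noteq> C i'" "z \<noteq> Q"
    "\<forall>j b. z = Lit j b \<longrightarrow> (j,b) \<notin> set (cls!i)" "i < length cls"
  shows "adjG k cls z (A i) = adjG k cls z (C i)"
  using assms unfolding adjG_def base_edge_def verts_def Xset_def by auto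



theorem lemma7:
  fixes k :: nat and cls :: "literal list list"
  assumes "wf_instance k cls"
    and "\<not> satisfiable k cls"
  shows "\<not> (\<exists>s \<sigma>. is_lbfs (adjG k cls) (verts k cls) s \<sigma> \<and> F_tree (adjG k cls) \<sigma> = treeT k cls)"
proof
  assume "\<exists>s \<sigma>. is_lbfs (adjG k cls) (verts k cls) s \<sigma> \<and> F_tree (adjG k cls) \<sigma> = treeT k cls"
  then obtain s \<sigma> where lb: "is_lbfs (adjG k cls) (verts k cls) s \<sigma>"
    and FT: "F_tree (adjG k cls) \<sigma> = treeT k cls" by blast
  let ?G = "adjG k cls"
  let ?V = "verts k cls"
  have dist: "distinct \<sigma>" and setV: "set \<sigma> = ?V" and sV: "s \<in> ?V" using lb by (auto simp: is_lbfs_def)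
  have clsne: "cls \<noteq> []" using assms(2) unfolding satisfiable_def by auto
  have kpos: "0 < k"
  proof -
    have "length (cls!0) = 3" using assms(1) clsne unfolding wf_instance_def by auto
    then obtain j b where "(j, b) \<in> set (cls!0)"
      by (metis length_0_conv neq_Nil_conv numeral_3_eq_3 old.nat.distinct(1) prod.exhaust list.set_intros(1))
    then show ?thesis using assms(1) clsne unfolding wf_instance_def by fastforce
  qed
  have inV: "R \<in> ?V" "P \<in> ?V" "Q \<in> ?V" "U \<in> ?V" by (auto simp: verts_def)
  have inV2: "\<And>i. i < length cls \<Longrightarrow> A i \<in> ?V \<and> C i \<in> ?V \<and> T i \<in> ?V" by (auto simp: verts_def)
  have inV3: "\<And>j b. j < k \<Longrightarrow> Lit j b \<in> ?V" by (auto simp: verts_def Xset_def)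
  have sne: "\<sigma> \<noteq> []" using setV inV by auto
  obtain pos where pos: "\<forall>x\<in>?V. pos x < length \<sigma> \<and> \<sigma>!(pos x) = x"
    using bchoice[of ?V "\<lambda>x i. i < length \<sigma> \<and> \<sigma>!i = x"] setV by (metis in_set_conv_nth)
  have posN: "\<And>x. x \<in> ?V \<Longrightarrow> \<sigma>!(pos x) = x" and posL: "\<And>x. x \<in> ?V \<Longrightarrow> pos x < length \<sigma>"
    using pos by auto
  have pos_nth: "\<And>i. i < length \<sigma> \<Longrightarrow> pos (\<sigma>!i) = i"
    using pos setV dist by (metis nth_eq_iff_index_eq nth_mem)
  have pos_inj: "\<And>x y. x \<in> ?V \<Longrightarrow> y \<in> ?V \<Longrightarrow> pos x = pos y \<Longrightarrow> x = y"
    using pos by metis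
  have nthV: "\<And>i. i < length \<sigma> \<Longrightarrow> \<sigma>!i \<in> ?V" using setV nth_mem by blast
  have nbr: "\<And>w. w \<in> ?V \<Longrightarrow> ?G (\<sigma>!0) w \<Longrightarrow> {w, \<sigma>!0} \<in> treeT k cls"
  proof -
    fix w assume w: "w \<in> ?V" "?G (\<sigma>!0) w"
    have "w \<noteq> \<sigma>!0" using w(2) unfolding adjG_def by auto
    moreover have "leftmost_nbr ?G \<sigma> w = \<sigma>!0" using lm0[of \<sigma> ?G w] sne w(2) by simp
    ultimately show "{w, \<sigma>!0} \<in> treeT k cls" using Ftree_mem[of w \<sigma> ?G] w(1) setV FT by simp
  qed
  have s0V: "\<sigma>!0 \<in> ?V" using nthV[of 0] sne by simp
  have first: "\<sigma>!0 = R"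
  proof (cases "\<sigma>!0")
    case (Lit j b)
    have "{U, \<sigma>!0} \<in> treeT k cls" using nbr[of U] inV s0V Lit
      unfolding adjG_def base_edge_def by auto
    then show ?thesis using treeU Lit by fastforce
  next
    case (A i)
    have "{U, \<sigma>!0} \<in> treeT k cls" using nbr[of U] inV s0V A
      unfolding adjG_def base_edge_def by auto
    then show ?thesis using treeU A by fastforce
  next
    case (C i)
    have "{U, \<sigma>!0} \<in> treeT k cls" using nbr[of U] inV s0V C
      unfolding adjG_def base_edge_def by auto
    then show ?thesis using treeU C by fastforce
  next
    case Q
    have "{U, \<sigma>!0} \<in> treeT k cls" using nbr[of U] inV s0V Q
      unfolding adjG_def base_edge_def by auto
    then show ?thesis using treeU Q by fastforce
  next
    case (T i)
    have il: "i < length cls" using s0V T by (auto simp: verts_def Xset_def)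
    have "{A i, \<sigma>!0} \<in> treeT k cls" using nbr[of "A i"] inV2[OF il] T il
      unfolding adjG_def base_edge_def by auto
    then show ?thesis using T unfolding treeT_def adjG_def base_edge_def by (auto simp: doubleton_eq_iff)
  next
    case P
    have "{Lit 0 True, \<sigma>!0} \<in> treeT k cls" using nbr[of "Lit 0 True"] inV3[OF kpos] P kpos
      unfolding adjG_def base_edge_def by (auto simp: Xset_def)
    then show ?thesis using P unfolding treeT_def adjG_def base_edge_def by (auto simp: doubleton_eq_iff)
  next
    case U
    have "{C 0, \<sigma>!0} \<in> treeT k cls" using nbr[of "C 0"] inV2 clsne U
      unfolding adjG_def base_edge_def by auto
    then show ?thesis using U unfolding treeT_def adjG_def base_edge_def by (auto simp: doubleton_eq_iff)
  next
    case R then show ?thesis .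
  qed
  have s_is: "s = \<sigma>!0"
  proof (rule ccontr)
    assume ne: "s \<noteq> \<sigma>!0"
    have "1 \<in> {1..length \<sigma>}" using sne by (cases \<sigma>) auto
    with lb sV have "\<not> lex_less (lbfs_label ?G (length \<sigma>) s \<sigma> 1 (\<sigma>!0)) (lbfs_label ?G (length \<sigma>) s \<sigma> 1 s)"
      unfolding is_lbfs_def by fastforce
    with ne show False by (simp add: lbfs_label_def lex_less_def)
  qed
  have len2: "1 < length \<sigma>"
  proof -
    have "pos P \<noteq> 0" proof
      assume "pos P = 0" then have "\<sigma>!0 = P" using posN[OF inV(2)] by simp
      then show False using first by simp
    qed
    then show ?thesis using posL[OF inV(2)] by linarith
  qed
  have adj1: "?G R (\<sigma>!1)"
  proof (rule ccontr)
    assume na: "\<not> ?G R (\<sigma>!1)"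
    have "2 \<in> {1..length \<sigma>}" using len2 by auto
    moreover have "P \<notin> set (take 1 \<sigma>)" using first sne by (cases \<sigma>) auto
    ultimately have "\<not> lex_less (lbfs_label ?G (length \<sigma>) s \<sigma> 2 (\<sigma>!1)) (lbfs_label ?G (length \<sigma>) s \<sigma> 2 P)"
      using lb inV unfolding is_lbfs_def by fastforce
    moreover have "\<sigma>!1 \<noteq> s"
    proof
      assume "\<sigma>!1 = s"
      then have "\<sigma>!1 = \<sigma>!0" using s_is by simp
      moreover have l0: "0 < length \<sigma>" using len2 by linarith
      ultimately show False using nth_eq_iff_index_eq[OF dist len2 l0] by simp
    qed
    moreover have "P \<noteq> s" using s_is first by simp
    moreover have "?G R P" unfolding adjG_def base_edge_def by (auto simp: verts_def)
    ultimately show False using na first by (simp add: lbfs_label_def lex_less_def numeral_2_eq_2)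
  qed
  have U1: "?G (\<sigma>!1) U" using adjR_U[OF adj1] .
  have lmU: "leftmost_nbr ?G \<sigma> U = P"
  proof -
    have "U \<noteq> \<sigma>!0" using first by simp
    then have "{U, leftmost_nbr ?G \<sigma> U} \<in> treeT k cls" using Ftree_mem[of U \<sigma> ?G] inV setV FT by simp
    then show ?thesis using treeU by blast
  qed
  have posP: "pos P = 1"
  proof -
    have "pos P \<le> 1" using lm_le[of \<sigma> 1 ?G U "pos P"] dist len2 U1 lmU posN[OF inV(2)] posL[OF inV(2)] by simp
    moreover have "pos P \<noteq> 0" proof
      assume "pos P = 0" then have "\<sigma>!0 = P" using posN[OF inV(2)] by simp
      then show False using first by simp
    qed
    ultimately show ?thesis by simp
  qed
  have second: "\<sigma>!1 = P" using posN[OF inV(2)] posP by simp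
  have posR: "pos R = 0" using pos_nth[of 0] first sne by simp
  have posQN: "\<sigma>!(pos Q) = Q" and posQL: "pos Q < length \<sigma>" using posN posL inV by auto
  have afterQ: "\<And>x. x \<in> ?V \<Longrightarrow> (\<exists>i. x = A i \<or> x = C i) \<Longrightarrow> pos Q < pos x"
  proof -
    fix x assume x: "x \<in> ?V" "\<exists>i. x = A i \<or> x = C i"
    then obtain i where xi: "x = A i \<or> x = C i" by blast
    have il: "i < length cls" using x(1) xi by (auto simp: verts_def Xset_def)
    have pxN: "\<sigma>!(pos x) = x" and pxL: "pos x < length \<sigma>" using posN posL x(1) by auto
    have ne: "pos x \<noteq> pos Q"
    proof
      assume "pos x = pos Q" then have "x = Q" using pxN posQN by metis
      with xi show False by auto
    qed
    show "pos Q < pos x"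
    proof (rule ccontr)
      assume "\<not> pos Q < pos x"
      with ne have lt: "pos x < pos Q" by simp
      have "pos x \<noteq> 0"
      proof
        assume "pos x = 0" then have "x = R" using pxN first by metis
        with xi show False by auto
      qed
      moreover have "pos x \<noteq> 1"
      proof
        assume "pos x = 1" then have "x = P" using pxN second by metis
        with xi show False by auto
      qed
      ultimately have g1: "1 < pos x" by simp
      have g2: "?G (\<sigma>!1) (\<sigma>!pos Q)" unfolding second posQN
        unfolding adjG_def base_edge_def by auto
      have g3: "\<not> ?G (\<sigma>!1) (\<sigma>!pos x)" unfolding second pxN using xi
        unfolding adjG_def base_edge_def by (auto simp: verts_def Xset_def)
      have g4: "\<forall>t<1. ?G (\<sigma>!t) (\<sigma>!pos Q) = ?G (\<sigma>!t) (\<sigma>!pos x)"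
        unfolding pxN posQN using first xi il inV unfolding adjG_def base_edge_def by (auto simp: verts_def)
      show False using key[OF lb s_is g1 lt posQL g2 g3 g4] .
    qed
  qed
  have cons0: "\<And>j b. j < k \<Longrightarrow> \<not> (pos (Lit j b) < pos (Lit j (\<not> b)) \<and> pos (Lit j (\<not> b)) < pos Q)"
  proof
    fix j b assume j: "j < k" and h: "pos (Lit j b) < pos (Lit j (\<not> b)) \<and> pos (Lit j (\<not> b)) < pos Q"
    have l1: "Lit j b \<in> ?V" "Lit j (\<not> b) \<in> ?V" using inV3[OF j] by auto
    have N1: "\<sigma>!pos (Lit j b) = Lit j b" "\<sigma>!pos (Lit j (\<not> b)) = Lit j (\<not> b)" using posN l1 by auto
    have g2: "?G (\<sigma>!pos (Lit j b)) (\<sigma>!pos Q)" unfolding N1 posQN using j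
      unfolding adjG_def base_edge_def by (auto simp: Xset_def)
    have g3: "\<not> ?G (\<sigma>!pos (Lit j b)) (\<sigma>!pos (Lit j (\<not> b)))" unfolding N1
      unfolding adjG_def base_edge_def by (auto simp: verts_def)
    have g4: "\<forall>t<pos (Lit j b). ?G (\<sigma>!t) (\<sigma>!pos Q) = ?G (\<sigma>!t) (\<sigma>!pos (Lit j (\<not> b)))"
    proof (intro allI impI)
      fix t assume t: "t < pos (Lit j b)"
      have tl: "t < length \<sigma>" using t h posQL by linarith
      let ?z = "\<sigma>!t"
      have zV: "?z \<in> ?V" using nthV[OF tl] .
      have pz: "pos ?z = t" using pos_nth[OF tl] .
      have a1: "\<forall>i. ?z \<noteq> A i \<and> ?z \<noteq> C i"
      proof (intro allI conjI notI)
        fix i assume "?z = A i" then show False using afterQ[OF zV] pz t h by auto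
      next
        fix i assume "?z = C i" then show False using afterQ[OF zV] pz t h by auto
      qed
      have a2: "?z \<noteq> Lit j b" "?z \<noteq> Lit j (\<not> b)" "?z \<noteq> Q" using pz t h by auto
      show "?G ?z (\<sigma>!pos Q) = ?G ?z (\<sigma>!pos (Lit j (\<not> b)))"
        unfolding N1 posQN using agree1[OF zV a1 a2(1) a2(2) j a2(3)] .
    qed
    have g1: "pos (Lit j b) < pos (Lit j (\<not> b))" "pos (Lit j (\<not> b)) < pos Q" using h by auto
    show False using key[OF lb s_is g1 posQL g2 g3 g4] .
  qed
  define \<alpha> where "\<alpha> = (\<lambda>j. pos (Lit j True) < pos Q)"
  have "\<not> (\<forall>c\<in>set cls. \<exists>(j, b)\<in>set c. \<alpha> j = b)"
    using assms(2) unfolding satisfiable_def by (rule contrapos_nn) (rule exI)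
  then obtain c where c: "c \<in> set cls" and cf: "\<not> (\<exists>(j, b)\<in>set c. \<alpha> j = b)"
    by blast
  obtain i where il: "i < length cls" and ci: "cls!i = c" using c by (metis in_set_conv_nth)
  have litsafter: "\<And>j b. (j, b) \<in> set (cls!i) \<Longrightarrow> pos Q < pos (Lit j b)"
  proof -
    fix j b assume jb: "(j, b) \<in> set (cls!i)"
    have "\<forall>(j, b)\<in>set c. j < k" using assms(1) c unfolding wf_instance_def by blast
    then have j: "j < k" using ci jb by auto
    have ne: "\<And>b. pos (Lit j b) \<noteq> pos Q"
    proof
      fix b assume "pos (Lit j b) = pos Q"
      then have "Lit j b = Q" using posN[OF inV3[OF j, of b]] posQN by metis
      then show False by simp
    qed
    have ne2: "pos (Lit j True) \<noteq> pos (Lit j False)"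
    proof
      assume "pos (Lit j True) = pos (Lit j False)"
      then have "Lit j True = Lit j False" using posN[OF inV3[OF j, of True]] posN[OF inV3[OF j, of False]] by metis
      then show False by simp
    qed
    have av: "\<alpha> j \<noteq> b" using cf jb ci by auto
    show "pos Q < pos (Lit j b)"
    proof (cases b)
      case True then show ?thesis using av ne[of True] unfolding \<alpha>_def by simp
    next
      case False
      then have lt: "pos (Lit j True) < pos Q" using av unfolding \<alpha>_def by simp
      show ?thesis
      proof (rule ccontr)
        assume "\<not> pos Q < pos (Lit j b)"
        then have lf: "pos (Lit j False) < pos Q" using ne[of b] False by simp
        show False
        proof (cases "pos (Lit j True) < pos (Lit j False)")
          case True then show False using cons0[OF j, of True] lf by simp
        next
          case False then show False using cons0[OF j, of False] lt ne2 by simp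
        qed
      qed
    qed
  qed
  have AV: "A i \<in> ?V" and CV: "C i \<in> ?V" and TV: "T i \<in> ?V" using inV2[OF il] by auto
  have lmT: "leftmost_nbr ?G \<sigma> (T i) = C i"
  proof -
    have "T i \<noteq> \<sigma>!0" using first by simp
    then have "{T i, leftmost_nbr ?G \<sigma> (T i)} \<in> treeT k cls" using Ftree_mem[of "T i" \<sigma> ?G] TV setV FT by simp
    then show ?thesis using treeTi by blast
  qed
  have NA: "\<sigma>!pos (A i) = A i" and NC: "\<sigma>!pos (C i) = C i" and LA: "pos (A i) < length \<sigma>"
    and LC: "pos (C i) < length \<sigma>" using posN posL AV CV by auto
  have "?G (\<sigma>!pos (A i)) (T i)" unfolding NA using il unfolding adjG_def base_edge_def by auto
  then have "pos (C i) \<le> pos (A i)" using lm_le[of \<sigma> "pos (A i)" ?G "T i" "pos (C i)"] dist LA LC lmT NC by simp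
  moreover have "pos (C i) \<noteq> pos (A i)" using NA NC by force
  ultimately have CA: "pos (C i) < pos (A i)" by simp
  have QC: "pos Q < pos (C i)" using afterQ[OF CV] by blast
  have g2: "?G (\<sigma>!pos Q) (\<sigma>!pos (A i))" unfolding posQN NA using il unfolding adjG_def base_edge_def by auto
  have g3: "\<not> ?G (\<sigma>!pos Q) (\<sigma>!pos (C i))" unfolding posQN NC unfolding adjG_def base_edge_def by (auto simp: Xset_def)
  have g4: "\<forall>t<pos Q. ?G (\<sigma>!t) (\<sigma>!pos (A i)) = ?G (\<sigma>!t) (\<sigma>!pos (C i))"
  proof (intro allI impI)
    fix t assume t: "t < pos Q"
    have tl: "t < length \<sigma>" using t posQL by linarith
    let ?z = "\<sigma>!t"
    have zV: "?z \<in> ?V" using nthV[OF tl] .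
    have pz: "pos ?z = t" using pos_nth[OF tl] .
    have a1: "\<forall>i. ?z \<noteq> A i \<and> ?z \<noteq> C i"
    proof (intro allI conjI notI)
      fix i assume "?z = A i" then show False using afterQ[OF zV] pz t by auto
    next
      fix i assume "?z = C i" then show False using afterQ[OF zV] pz t by auto
    qed
    have a2: "?z \<noteq> Q" using pz t by auto
    have a3: "\<forall>j b. ?z = Lit j b \<longrightarrow> (j,b) \<notin> set (cls!i)"
    proof (intro allI impI notI)
      fix j b assume "?z = Lit j b" "(j,b) \<in> set (cls!i)"
      then show False using litsafter[of j b] pz t by auto
    qed
    show "?G ?z (\<sigma>!pos (A i)) = ?G ?z (\<sigma>!pos (C i))"
      unfolding NA NC using agree2[OF zV a1 a2 a3 il] .
  qed
  show False using key[OF lb s_is QC CA LA g2 g3 g4] .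
qed

end
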